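(* Let $n\ge 1$ be odd. Consider the generalized $n$-gene repressilator system $$\dot r_i = a_i(p_{i-1}) - d_{r_i}(r_i),\qquad \dot p_i = k_i(r_i) - d_{p_i}(p_i),\qquad i=1,\dots,n,$$ (indices mod $n$), with functions satisfying the standing assumptions in the context, and let $E_C=(r_1^*,\dots,r_n^*,p_1^*,\dots,p_n^* )\in(0,\infty)^{2n}$ be its (central) steady state. If $\mathcal{D} > |\mathcal{K}|$, where $\mathcal{D}$ and $\mathcal{K}$ are evaluated at $E_C$, then $E_C$ is locally asymptotically stable.
   Context: Standing assumptions: each $a_i:[0,\infty)\to\mathbb{R}$ is $C^1$, nonnegative, strictly decreasing, with $a_i(0)>0$; each $d_{r_i}, d_{p_i}, k_i:[0,\infty)\to\mathbb{R}$ is $C^1$, vanishes at $0$, and is strictly increasing on $(0,\infty)$. At the steady state define $\partial_i^R := d_{r_i}'(r_i^* )$, $\partial_i^P := d_{p_i}'(p_i^* )$, $\mathcal{D}:=\prod_{i=1}^n \partial_i^R\partial_i^P$, $\mathcal{K}_i := k_i'(r_i^* )\,a_i'(p_{i-1}^* )$, and $\mathcal{K}:=\prod_{i=1}^n\mathcal{K}_i$. A steady state is called (locally asymptotically) stable if every eigenvalue of the Jacobian matrix at it has negative real part. *)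

theory Defs
  imports "HOL-Analysis.Analysis" "Jordan_Normal_Form.Char_Poly"
begin

text \<open>Genes are indexed 0,...,n-1 (cyclically); the predecessor of gene i is (i + n - 1) mod n.
  The state is x :: nat => real with x i = r_i and x (n + i) = p_i for i < n.\<close>

definition pred_idx :: "nat \<Rightarrow> nat \<Rightarrow> nat" where
  "pred_idx n i = (i + n - 1) mod n"

definition repr_field ::
  "nat \<Rightarrow> (nat \<Rightarrow> real \<Rightarrow> real) \<Rightarrow> (nat \<Rightarrow> real \<Rightarrow> real) \<Rightarrow> (nat \<Rightarrow> real \<Rightarrow> real)
   \<Rightarrow> (nat \<Rightarrow> real \<Rightarrow> real) \<Rightarrow> (nat \<Rightarrow> real) \<Rightarrow> nat \<Rightarrow> real" where
  "repr_field n a dr k dp x j =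
     (if j < n then a j (x (n + pred_idx n j)) - dr j (x j)
      else k (j - n) (x (j - n)) - dp (j - n) (x j))"

definition repr_jacobian ::
  "nat \<Rightarrow> (nat \<Rightarrow> real \<Rightarrow> real) \<Rightarrow> (nat \<Rightarrow> real \<Rightarrow> real) \<Rightarrow> (nat \<Rightarrow> real \<Rightarrow> real)
   \<Rightarrow> (nat \<Rightarrow> real \<Rightarrow> real) \<Rightarrow> (nat \<Rightarrow> real) \<Rightarrow> real mat" where
  "repr_jacobian n a dr k dp x =
     mat (2 * n) (2 * n)
       (\<lambda>(i, j). deriv (\<lambda>t. repr_field n a dr k dp (x(j := t)) i) (x j))"

text \<open>Locally asymptotically stable: every (complex) eigenvalue of the Jacobian has negative real part.\<close>
definition jac_stable :: "real mat \<Rightarrow> bool" where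
  "jac_stable J = (\<forall>z. eigenvalue (map_mat complex_of_real J) z \<longrightarrow> Re z < 0)"

end

theory Submission
  imports Defs
begin

lemma deriv_open:
  assumes "(f has_real_derivative f') (at s within {0..})" "s > 0"
  shows "(f has_real_derivative f') (at s)"
proof -
  have "(f has_real_derivative f') (at s within {0<..})"
    using assms(1) by (rule has_field_derivative_subset) auto
  thus ?thesis using assms(2) at_within_open[of s "{0<..}"] by auto
qed

lemma deriv_nonneg_incr:
  fixes f :: "real \<Rightarrow> real"
  assumes "(f has_real_derivative f') (at s)" "s > 0"
    "\<And>s t. 0 < s \<Longrightarrow> s < t \<Longrightarrow> f s < f t"
  shows "f' \<ge> 0"
proof (rule ccontr)
  assume "\<not> f' \<ge> 0"
  then obtain d where d: "d > 0" "\<And>h. h > 0 \<Longrightarrow> h < d \<Longrightarrow> f s > f (s + h)"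
    using DERIV_neg_dec_right[OF assms(1)] by force
  have "f s > f (s + d/2)" using d by auto
  moreover have "f s < f (s + d/2)" using assms(2,3) d by auto
  ultimately show False by simp
qed

lemma pred_idx_lt: "i < n \<Longrightarrow> pred_idx n i < n"
  unfolding pred_idx_def by auto

lemma pred_idx_suc: "i < n \<Longrightarrow> pred_idx n (Suc i mod n) = i"
proof (cases "Suc i = n")
  case True
  then show ?thesis unfolding pred_idx_def by simp
next
  case False
  assume "i < n"
  with False have "Suc i < n" by simp
  then have "Suc i mod n = Suc i" by simp
  then show ?thesis unfolding pred_idx_def using \<open>i < n\<close> by simp
qed

lemma pred_idx_bij: "bij_betw (pred_idx n) {..<n} {..<n}"
proof -
  have s: "pred_idx n ` {..<n} = {..<n}"
  proof
    show "pred_idx n ` {..<n} \<subseteq> {..<n}" using pred_idx_lt by auto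
    show "{..<n} \<subseteq> pred_idx n ` {..<n}"
    proof
      fix i assume "i \<in> {..<n}"
      then have "i = pred_idx n (Suc i mod n)" "Suc i mod n \<in> {..<n}" using pred_idx_suc by auto
      thus "i \<in> pred_idx n ` {..<n}" by blast
    qed
  qed
  hence "inj_on (pred_idx n) {..<n}"
    by (simp add: eq_card_imp_inj_on)
  thus ?thesis using s by (simp add: bij_betw_def)
qed

lemma entry_top:
  fixes a a' dr dr' :: "nat \<Rightarrow> real \<Rightarrow> real"
  assumes "i < n" "j < 2*n" "x j > 0"
    and a_deriv: "\<And>s. s \<ge> 0 \<Longrightarrow> (a i has_real_derivative a' i s) (at s within {0..})"
    and dr_deriv: "\<And>s. s \<ge> 0 \<Longrightarrow> (dr i has_real_derivative dr' i s) (at s within {0..})"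
  shows "repr_jacobian n a dr k dp x $$ (i,j) =
     (if j = n + pred_idx n i then a' i (x j) else 0) - (if j = i then dr' i (x j) else 0)"
proof -
  have A: "(a i has_real_derivative a' i (x j)) (at (x j))" 
    using deriv_open[OF a_deriv] assms(3) by auto
  have D: "(dr i has_real_derivative dr' i (x j)) (at (x j))" 
    using deriv_open[OF dr_deriv] assms(3) by auto
  have f: "(\<lambda>t. repr_field n a dr k dp (x(j := t)) i) = 
     (\<lambda>t. a i ((x(j := t)) (n + pred_idx n i)) - dr i ((x(j := t)) i))"
    using assms(1) by (simp add: repr_field_def)
  have "((\<lambda>t. a i ((x(j := t)) (n + pred_idx n i)) - dr i ((x(j := t)) i)) has_real_derivative
     (if j = n + pred_idx n i then a' i (x j) else 0) - (if j = i then dr' i (x j) else 0)) (at (x j))"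
  proof (cases "j = n + pred_idx n i")
    case True
    then have "j \<noteq> i" using assms(1) by auto
    then show ?thesis using True A by (auto intro!: derivative_eq_intros)
  next
    case False
    show ?thesis
    proof (cases "j = i")
      case True
      then show ?thesis using False D by (auto intro!: derivative_eq_intros)
    next
      case F2: False
      then show ?thesis using False by (auto intro!: derivative_eq_intros)
    qed
  qed
  then show ?thesis using assms(1,2) f
    by (simp add: repr_jacobian_def DERIV_imp_deriv)
qed

lemma entry_bot:
  fixes k k' dp dp' :: "nat \<Rightarrow> real \<Rightarrow> real"
  assumes "i < n" "j < 2*n" "x j > 0"
    and k_deriv: "\<And>s. s \<ge> 0 \<Longrightarrow> (k i has_real_derivative k' i s) (at s within {0..})"
    and dp_deriv: "\<And>s. s \<ge> 0 \<Longrightarrow> (dp i has_real_derivative dp' i s) (at s within {0..})"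
  shows "repr_jacobian n a dr k dp x $$ (n+i,j) =
     (if j = i then k' i (x j) else 0) - (if j = n + i then dp' i (x j) else 0)"
proof -
  have A: "(k i has_real_derivative k' i (x j)) (at (x j))" 
    using deriv_open[OF k_deriv] assms(3) by auto
  have D: "(dp i has_real_derivative dp' i (x j)) (at (x j))" 
    using deriv_open[OF dp_deriv] assms(3) by auto
  have f: "(\<lambda>t. repr_field n a dr k dp (x(j := t)) (n+i)) = 
     (\<lambda>t. k i ((x(j := t)) i) - dp i ((x(j := t)) (n+i)))"
    using assms(1) by (simp add: repr_field_def)
  have "((\<lambda>t. k i ((x(j := t)) i) - dp i ((x(j := t)) (n+i))) has_real_derivative
     (if j = i then k' i (x j) else 0) - (if j = n + i then dp' i (x j) else 0)) (at (x j))"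
  proof (cases "j = i")
    case True
    then have "j \<noteq> n + i" using assms(1) by auto
    then show ?thesis using True A by (auto intro!: derivative_eq_intros)
  next
    case False
    show ?thesis
    proof (cases "j = n + i")
      case True
      then show ?thesis using False D by (auto intro!: derivative_eq_intros)
    next
      case F2: False
      then show ?thesis using False by (auto intro!: derivative_eq_intros)
    qed
  qed
  then show ?thesis using assms(1,2) f
    by (simp add: repr_jacobian_def DERIV_imp_deriv)
qed

lemma sum_two:
  fixes v :: "complex vec"
  assumes "j0 < m" "j1 < m" "j0 \<noteq> j1"
  shows "(\<Sum>j\<in>{0..<m}. complex_of_real ((if j = j0 then \<alpha> else 0) - (if j = j1 then \<beta> else 0)) * v$j)
     = of_real \<alpha> * v$j0 - of_real \<beta> * v$j1"
proof -
  have "(\<Sum>j\<in>{0..<m}. complex_of_real ((if j = j0 then \<alpha> else 0) - (if j = j1 then \<beta> else 0)) * v$j)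
     = (\<Sum>j\<in>{0..<m}. (if j = j0 then of_real \<alpha> * v$j else 0) - (if j = j1 then of_real \<beta> * v$j else 0))"
    by (rule sum.cong) (auto simp: algebra_simps)
  also have "\<dots> = of_real \<alpha> * v$j0 - of_real \<beta> * v$j1"
    using assms by (simp add: sum_subtractf)
  finally show ?thesis .
qed

theorem proposition5:
  fixes n :: nat
    and a a' dr dr' k k' dp dp' :: "nat \<Rightarrow> real \<Rightarrow> real"
    and x :: "nat \<Rightarrow> real"
  assumes n_odd: "odd n"
    \<comment> \<open>a_i: C^1 on [0,oo), nonnegative, strictly decreasing, a_i(0) > 0\<close>
    and a_deriv: "\<And>i s. i < n \<Longrightarrow> s \<ge> 0 \<Longrightarrow> (a i has_real_derivative a' i s) (at s within {0..})"
    and a'_cont: "\<And>i. i < n \<Longrightarrow> continuous_on {0..} (a' i)"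
    and a_nonneg: "\<And>i s. i < n \<Longrightarrow> s \<ge> 0 \<Longrightarrow> a i s \<ge> 0"
    and a_decr: "\<And>i s t. i < n \<Longrightarrow> 0 \<le> s \<Longrightarrow> s < t \<Longrightarrow> a i t < a i s"
    and a_zero: "\<And>i. i < n \<Longrightarrow> a i 0 > 0"
    \<comment> \<open>d_r_i, d_p_i, k_i: C^1 on [0,oo), vanish at 0, strictly increasing on (0,oo)\<close>
    and dr_deriv: "\<And>i s. i < n \<Longrightarrow> s \<ge> 0 \<Longrightarrow> (dr i has_real_derivative dr' i s) (at s within {0..})"
    and dr'_cont: "\<And>i. i < n \<Longrightarrow> continuous_on {0..} (dr' i)"
    and dr_zero: "\<And>i. i < n \<Longrightarrow> dr i 0 = 0"
    and dr_incr: "\<And>i s t. i < n \<Longrightarrow> 0 < s \<Longrightarrow> s < t \<Longrightarrow> dr i s < dr i t"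
    and dp_deriv: "\<And>i s. i < n \<Longrightarrow> s \<ge> 0 \<Longrightarrow> (dp i has_real_derivative dp' i s) (at s within {0..})"
    and dp'_cont: "\<And>i. i < n \<Longrightarrow> continuous_on {0..} (dp' i)"
    and dp_zero: "\<And>i. i < n \<Longrightarrow> dp i 0 = 0"
    and dp_incr: "\<And>i s t. i < n \<Longrightarrow> 0 < s \<Longrightarrow> s < t \<Longrightarrow> dp i s < dp i t"
    and k_deriv: "\<And>i s. i < n \<Longrightarrow> s \<ge> 0 \<Longrightarrow> (k i has_real_derivative k' i s) (at s within {0..})"
    and k'_cont: "\<And>i. i < n \<Longrightarrow> continuous_on {0..} (k' i)"
    and k_zero: "\<And>i. i < n \<Longrightarrow> k i 0 = 0"
    and k_incr: "\<And>i s t. i < n \<Longrightarrow> 0 < s \<Longrightarrow> s < t \<Longrightarrow> k i s < k i t"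
    \<comment> \<open>x is a steady state in (0,oo)^(2n): x i = r_i*, x (n+i) = p_i*\<close>
    and x_pos: "\<And>j. j < 2 * n \<Longrightarrow> x j > 0"
    and steady: "\<And>j. j < 2 * n \<Longrightarrow> repr_field n a dr k dp x j = 0"
    \<comment> \<open>D > |K|\<close>
    and DK: "(\<Prod>i<n. dr' i (x i) * dp' i (x (n + i)))
               > \<bar>\<Prod>i<n. k' i (x i) * a' i (x (n + pred_idx n i))\<bar>"
  shows "jac_stable (repr_jacobian n a dr k dp x)"
proof -
  let ?J = "repr_jacobian n a dr k dp x"
  let ?Jc = "map_mat complex_of_real ?J"
  have n0: "n > 0" using n_odd by (cases n) auto
  have dimJ: "dim_row ?J = 2*n" "dim_col ?J = 2*n" by (simp_all add: repr_jacobian_def)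
  define p where "p = pred_idx n"
  have p_lt: "\<And>i. i < n \<Longrightarrow> p i < n" using pred_idx_lt p_def by auto
  define u where "u = (\<lambda>v::complex vec. \<lambda>i. cmod (v$i))"
  define \<alpha> where "\<alpha> i = dr' i (x i)" for i
  define \<beta> where "\<beta> i = dp' i (x (n+i))" for i
  define A where "A i = \<bar>a' i (x (n + p i))\<bar>" for i
  define B where "B i = \<bar>k' i (x i)\<bar>" for i
  have \<alpha>_nn: "\<alpha> i \<ge> 0" if "i < n" for i
    unfolding \<alpha>_def
    by (rule deriv_nonneg_incr[OF deriv_open[OF dr_deriv]]) (use that x_pos[of i] dr_incr in auto)
  have \<beta>_nn: "\<beta> i \<ge> 0" if "i < n" for i
    unfolding \<beta>_def
    by (rule deriv_nonneg_incr[OF deriv_open[OF dp_deriv]]) (use that x_pos[of "n+i"] dp_incr in auto)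
  have DK': "(\<Prod>i<n. \<alpha> i * \<beta> i) > (\<Prod>i<n. A i * B i)"
    using DK unfolding \<alpha>_def \<beta>_def A_def B_def p_def
    by (simp add: abs_prod abs_mult mult.commute)
  have \<alpha>\<beta>_pos: "\<alpha> i > 0 \<and> \<beta> i > 0" if "i < n" for i
  proof (rule ccontr)
    assume "\<not> (\<alpha> i > 0 \<and> \<beta> i > 0)"
    then have "\<alpha> i * \<beta> i = 0" using \<alpha>_nn[OF that] \<beta>_nn[OF that] by auto
    then have "(\<Prod>i<n. \<alpha> i * \<beta> i) = 0" using that by (auto intro: prod_zero)
    moreover have "(\<Prod>i<n. A i * B i) \<ge> 0" unfolding A_def B_def by (auto intro: prod_nonneg)
    ultimately show False using DK' by linarith
  qed
  show ?thesis
    unfolding jac_stable_def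
  proof (intro allI impI)
    fix z assume "eigenvalue ?Jc z"
    then obtain v where v: "v \<in> carrier_vec (2*n)" "v \<noteq> 0\<^sub>v (2*n)" "?Jc *\<^sub>v v = z \<cdot>\<^sub>v v"
      unfolding eigenvalue_def eigenvector_def using dimJ by auto
    show "Re z < 0"
    proof (rule ccontr)
      assume "\<not> Re z < 0"
      then have z0: "Re z \<ge> 0" by simp
      have dv: "dim_vec v = 2*n" using v(1) by auto
      have top: "z * v$i = of_real (a' i (x (n + p i))) * v$(n + p i) - of_real (\<alpha> i) * v$i"
        if "i < n" for i
      proof -
        have "z * v$i = (?Jc *\<^sub>v v) $ i" using v(3) dv that by simp
        also have "\<dots> = (\<Sum>j\<in>{0..<2*n}. complex_of_real ((if j = n + p i then a' i (x (n + p i)) else 0) - (if j = i then dr' i (x i) else 0)) * v$j)"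
          using that dimJ dv
          by (auto simp: scalar_prod_def p_def entry_top[OF _ _ _ a_deriv dr_deriv] x_pos intro!: sum.cong)
        also have "\<dots> = of_real (a' i (x (n + p i))) * v$(n + p i) - of_real (\<alpha> i) * v$i"
          unfolding \<alpha>_def
          by (rule sum_two) (use that p_lt in auto)
        finally show ?thesis .
      qed
      have bot: "z * v$(n+i) = of_real (k' i (x i)) * v$i - of_real (\<beta> i) * v$(n+i)"
        if "i < n" for i
      proof -
        have "z * v$(n+i) = (?Jc *\<^sub>v v) $ (n+i)" using v(3) dv that by simp
        also have "\<dots> = (\<Sum>j\<in>{0..<2*n}. complex_of_real ((if j = i then k' i (x i) else 0) - (if j = n + i then dp' i (x (n+i)) else 0)) * v$j)"
          using that dimJ dv
          by (auto simp: scalar_prod_def entry_bot[OF _ _ _ k_deriv dp_deriv] x_pos intro!: sum.cong)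
        also have "\<dots> = of_real (k' i (x i)) * v$i - of_real (\<beta> i) * v$(n+i)"
          unfolding \<beta>_def
          by (rule sum_two) (use that in auto)
        finally show ?thesis .
      qed
      have cm: "cmod (z + of_real c) \<ge> c" if "c \<ge> 0" for c
      proof -
        have "c \<le> Re (z + of_real c)" using z0 by simp
        also have "\<dots> \<le> cmod (z + of_real c)" by (rule complex_Re_le_cmod)
        finally show ?thesis .
      qed
      have ineq1: "\<alpha> i * u v i \<le> A i * u v (n + p i)" if "i < n" for i
      proof -
        have "(z + of_real (\<alpha> i)) * v$i = of_real (a' i (x (n + p i))) * v$(n + p i)"
          using top[OF that] by (simp add: algebra_simps)
        then have "cmod (z + of_real (\<alpha> i)) * u v i = A i * u v (n + p i)"
          unfolding u_def A_def by (metis norm_mult norm_of_real)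
        moreover have "\<alpha> i * u v i \<le> cmod (z + of_real (\<alpha> i)) * u v i"
          using cm[OF \<alpha>_nn[OF that]] unfolding u_def by (simp add: mult_right_mono)
        ultimately show ?thesis by simp
      qed
      have ineq2: "\<beta> i * u v (n+i) \<le> B i * u v i" if "i < n" for i
      proof -
        have "(z + of_real (\<beta> i)) * v$(n+i) = of_real (k' i (x i)) * v$i"
          using bot[OF that] by (simp add: algebra_simps)
        then have "cmod (z + of_real (\<beta> i)) * u v (n+i) = B i * u v i"
          unfolding u_def B_def by (metis norm_mult norm_of_real)
        moreover have "\<beta> i * u v (n+i) \<le> cmod (z + of_real (\<beta> i)) * u v (n+i)"
          using cm[OF \<beta>_nn[OF that]] unfolding u_def by (simp add: mult_right_mono)
        ultimately show ?thesis by simp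
      qed
      show False
      proof (cases "\<forall>i<n. u v i > 0 \<and> u v (n+i) > 0")
        case True
        have P1: "(\<Prod>i<n. \<alpha> i * u v i) \<le> (\<Prod>i<n. A i * u v (n + p i))"
          by (rule prod_mono) (use ineq1 \<alpha>_nn True in \<open>auto\<close>)
        have P2: "(\<Prod>i<n. \<beta> i * u v (n+i)) \<le> (\<Prod>i<n. B i * u v i)"
          by (rule prod_mono) (use ineq2 \<beta>_nn True in \<open>auto\<close>)
        have re: "(\<Prod>i<n. u v (n + p i)) = (\<Prod>i<n. u v (n + i))"
          using prod.reindex_bij_betw[OF pred_idx_bij[of n], of "\<lambda>i. u v (n+i)"]
          unfolding p_def by simp
        define U where "U = (\<Prod>i<n. u v i)"
        define W where "W = (\<Prod>i<n. u v (n+i))"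
        have U0: "U > 0" unfolding U_def using True by (auto intro: prod_pos)
        have W0: "W > 0" unfolding W_def using True by (auto intro: prod_pos)
        have e1: "(\<Prod>i<n. \<alpha> i) * U \<le> (\<Prod>i<n. A i) * W"
          using P1 re unfolding U_def W_def by (simp add: prod.distrib)
        have e2: "(\<Prod>i<n. \<beta> i) * W \<le> (\<Prod>i<n. B i) * U"
          using P2 unfolding U_def W_def by (simp add: prod.distrib)
        have nnA: "(\<Prod>i<n. \<alpha> i) \<ge> 0" "(\<Prod>i<n. \<beta> i) \<ge> 0"
          using \<alpha>_nn \<beta>_nn by (auto intro: prod_nonneg)
        have "((\<Prod>i<n. \<alpha> i) * U) * ((\<Prod>i<n. \<beta> i) * W) \<le> ((\<Prod>i<n. A i) * W) * ((\<Prod>i<n. B i) * U)"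
          by (rule mult_mono[OF e1 e2]) (use U0 W0 nnA in \<open>auto simp: A_def intro!: prod_nonneg mult_nonneg_nonneg\<close>)
        then have "(\<Prod>i<n. \<alpha> i * \<beta> i) * (U * W) \<le> (\<Prod>i<n. A i * B i) * (U * W)"
          by (simp add: prod.distrib algebra_simps)
        then have "(\<Prod>i<n. \<alpha> i * \<beta> i) \<le> (\<Prod>i<n. A i * B i)"
          using U0 W0 by simp
        then show False using DK' by simp
      next
        case False
        have nn: "u v j \<ge> 0" for j unfolding u_def by simp
        have step: "u v (n + Suc i mod n) = 0" if "i < n" "u v (n+i) = 0" for i
        proof -
          have "Suc i mod n < n" using n0 by simp
          have "\<alpha> (Suc i mod n) * u v (Suc i mod n) \<le> 0"
            using ineq1[OF \<open>Suc i mod n < n\<close>] that pred_idx_suc[OF that(1)] unfolding p_def by simp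
          then have "u v (Suc i mod n) = 0"
            using \<alpha>\<beta>_pos[OF \<open>Suc i mod n < n\<close>] nn[of "Suc i mod n"]
            by (simp add: mult_le_0_iff)
          then have "\<beta> (Suc i mod n) * u v (n + Suc i mod n) \<le> 0"
            using ineq2[OF \<open>Suc i mod n < n\<close>] by simp
          then show ?thesis
            using \<alpha>\<beta>_pos[OF \<open>Suc i mod n < n\<close>] nn[of "n + Suc i mod n"]
            by (simp add: mult_le_0_iff)
        qed
        obtain i0 where i00: "i0 < n" "\<not> (u v i0 > 0 \<and> u v (n+i0) > 0)"
          using False by auto
        have i0: "i0 < n" "u v i0 = 0 \<or> u v (n+i0) = 0"
          using i00 nn[of i0] nn[of "n+i0"] by auto
        have w0: "u v (n+i0) = 0"
        proof -
          have "\<beta> i0 * u v (n+i0) \<le> 0"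
            using ineq2[OF i0(1)] i0(2) by auto
          then show ?thesis
            using \<alpha>\<beta>_pos[OF i0(1)] nn[of "n + i0"]
            by (simp add: mult_le_0_iff)
        qed
        have allw: "u v (n + (i0 + m) mod n) = 0" for m
        proof (induction m)
          case 0 then show ?case using w0 i0 by simp
        next
          case (Suc m)
          have "u v (n + Suc ((i0 + m) mod n) mod n) = 0"
            by (rule step) (use Suc n0 in auto)
          then show ?case by (simp add: mod_Suc_eq)
        qed
        have W: "u v (n + j) = 0" if "j < n" for j
          using allw[of "j + n - i0"] that i0(1)
          by (simp add: add.commute)
        have U: "u v j = 0" if "j < n" for j
        proof -
          have "\<alpha> j * u v j \<le> 0" using ineq1[OF that] W[OF p_lt[OF that]] by simp
          then show ?thesis using \<alpha>\<beta>_pos[OF that] nn[of j] by (simp add: mult_le_0_iff)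
        qed
        have "v = 0\<^sub>v (2*n)"
        proof (rule eq_vecI)
          fix j assume "j < dim_vec (0\<^sub>v (2*n) :: complex vec)"
          then have j: "j < 2*n" by simp
          show "v $ j = 0\<^sub>v (2*n) $ j"
          proof (cases "j < n")
            case True then show ?thesis using U[OF True] j unfolding u_def by simp
          next
            case False
            then have "j = n + (j - n)" "j - n < n" using j by auto
            then show ?thesis using W[of "j-n"] j unfolding u_def by (metis norm_eq_zero index_zero_vec(1))
          qed
        qed (use dv in simp)
        then show False using v(2) by simp
      qed
    qed
  qed
qed

end
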